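(* Let $X$ be a non-degenerate real-valued random variable with density $f_X$, CDF $F_X$, survival function $S_X=1-F_X$ and finite second moment. Let $h_X(x)=f_X(x)/S_X(x)$ (hazard rate) and $r_X(x)=f_X(x)/F_X(x)$ (reverse hazard rate). If $h_X$ is decreasing or $r_X$ is increasing, then \[ \mathrm{SD}[X]\ge \mathrm{GMD}[X], \] where $\mathrm{SD}[X]=\sqrt{\mathbb{E}[(X-\mathbb{E}X)^2]}=\sqrt{\tfrac12\mathbb{E}[(X-X')^2]}$ and $\mathrm{GMD}[X]=\mathbb{E}|X-X'|$, with $X'$ an independent copy of $X$.
   Context: "Increasing" and "decreasing" are meant in the non-strict sense, and monotonicity is required on the support of the function (almost surely). *)

theory Defs
  imports "HOL-Probability.Probability"
begin

definition cdf_of :: "'a measure \<Rightarrow> ('a \<Rightarrow> real) \<Rightarrow> real \<Rightarrow> real" where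
  "cdf_of M X x = measure M {\<omega> \<in> space M. X \<omega> \<le> x}"

definition hazard_rate :: "'a measure \<Rightarrow> ('a \<Rightarrow> real) \<Rightarrow> (real \<Rightarrow> real) \<Rightarrow> real \<Rightarrow> real" where
  "hazard_rate M X f x = f x / (1 - cdf_of M X x)"

definition rev_hazard_rate :: "'a measure \<Rightarrow> ('a \<Rightarrow> real) \<Rightarrow> (real \<Rightarrow> real) \<Rightarrow> real \<Rightarrow> real" where
  "rev_hazard_rate M X f x = f x / cdf_of M X x"

text \<open>Support region: points where 0 < F < 1 (interior of the convex hull of the support).\<close>
definition supp_region :: "'a measure \<Rightarrow> ('a \<Rightarrow> real) \<Rightarrow> real set" where
  "supp_region M X = {x. 0 < cdf_of M X x \<and> cdf_of M X x < 1}"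

definition ae_mono_on :: "real set \<Rightarrow> (real \<Rightarrow> real) \<Rightarrow> bool" where
  "ae_mono_on A g \<longleftrightarrow> (\<exists>N \<in> null_sets lborel. \<forall>x \<in> A - N. \<forall>y \<in> A - N. x \<le> y \<longrightarrow> g x \<le> g y)"

definition ae_antimono_on :: "real set \<Rightarrow> (real \<Rightarrow> real) \<Rightarrow> bool" where
  "ae_antimono_on A g \<longleftrightarrow> (\<exists>N \<in> null_sets lborel. \<forall>x \<in> A - N. \<forall>y \<in> A - N. x \<le> y \<longrightarrow> g y \<le> g x)"

end

theory Submission
  imports Defs
begin


lemma amgm_real:
  fixes a s p c :: real
  assumes "a*a \<le> s*p" "0 \<le> a" "0 \<le> s" "0 \<le> p" "0 \<le> c"
  shows "2 * c * a \<le> c * c * s + p"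
proof (cases "s = 0")
  case True
  then have "a = 0" using assms by (metis mult_eq_0_iff mult_zero_left order_antisym_conv zero_le_square)
  then show ?thesis using True assms by simp
next
  case False
  then have sp: "0 < s" using assms by simp
  have "s * (2 * c * a) \<le> s * (c * c * s + p)"
  proof -
    have "0 \<le> (c * s - a)^2" by simp
    then have "2 * c * s * a \<le> c * c * s * s + a * a" by (simp add: power2_eq_square algebra_simps)
    also have "\<dots> \<le> c * c * s * s + s * p" using assms(1) by simp
    finally show ?thesis by (simp add: algebra_simps)
  qed
  then show ?thesis using sp by (simp add: mult_le_cancel_left)
qed

lemma amgm_enn:
  fixes a s p :: ennreal and c :: real
  assumes "a*a \<le> s*p" "a < \<infinity>" "s < \<infinity>" "0 \<le> c"
  shows "2 * ennreal c * a \<le> ennreal c * ennreal c * s + p"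
proof (cases "p = \<infinity>")
  case True then show ?thesis by simp
next
  case False
  obtain a' where a: "a = ennreal a'" "0 \<le> a'" using assms(2) by (cases a) auto
  obtain s' where s: "s = ennreal s'" "0 \<le> s'" using assms(3) by (cases s) auto
  obtain p' where p: "p = ennreal p'" "0 \<le> p'" using False by (cases p) auto
  have "a'*a' \<le> s'*p'" using assms(1) a s p by (simp add: ennreal_mult'[symmetric] ennreal_le_iff)
  then have "2 * c * a' \<le> c * c * s' + p'" using amgm_real a s p assms(4) by blast
  moreover have "2 * ennreal c * a = ennreal (2 * c * a')" using a assms(4) by (simp add: ennreal_mult)
  moreover have "ennreal c * ennreal c * s + p = ennreal (c * c * s' + p')"
    using s p assms(4) by (simp add: ennreal_mult ennreal_plus)
  ultimately show ?thesis by (simp add: ennreal_leI)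
qed

context
  fixes \<mu> :: "real measure" and f :: "real \<Rightarrow> real"
  assumes P: "prob_space \<mu>"
    and D: "\<mu> = density lborel (\<lambda>x. ennreal (f x))"
    and fm[measurable]: "f \<in> borel_measurable borel"
    and fnn: "\<And>x. 0 \<le> f x"
    and I2: "integrable \<mu> (\<lambda>x. x\<^sup>2)"
begin

lemma sets_mu[measurable_cong]: "sets \<mu> = sets borel"
  using D by simp

lemma space_mu[simp]: "space \<mu> = UNIV"
  using D by simp

lemma sf_mu: "sigma_finite_measure \<mu>"
  using P prob_space_imp_sigma_finite by blast

interpretation mu: prob_space \<mu> by (rule P)

interpretation lm: pair_sigma_finite lborel \<mu>
  by (simp add: pair_sigma_finite.intro sf_mu lborel.sigma_finite_measure_axioms)

interpretation mm: pair_sigma_finite \<mu> \<mu>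
  by (simp add: pair_sigma_finite.intro sf_mu)

lemma meas_lm: "g \<in> borel_measurable (borel \<Otimes>\<^sub>M borel) \<Longrightarrow> g \<in> borel_measurable (lborel \<Otimes>\<^sub>M \<mu>)"
  by (subst measurable_cong_sets[OF sets_pair_measure_cong[OF sets_lborel sets_mu] refl])

lemma meas_ml: "g \<in> borel_measurable (borel \<Otimes>\<^sub>M borel) \<Longrightarrow> g \<in> borel_measurable (\<mu> \<Otimes>\<^sub>M lborel)"
  by (subst measurable_cong_sets[OF sets_pair_measure_cong[OF sets_mu sets_lborel] refl])

lemma meas_mm: "g \<in> borel_measurable (borel \<Otimes>\<^sub>M borel) \<Longrightarrow> g \<in> borel_measurable (\<mu> \<Otimes>\<^sub>M \<mu>)"
  by (subst measurable_cong_sets[OF sets_pair_measure_cong[OF sets_mu sets_mu] refl])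

lemma meas_nn: "case_prod g \<in> borel_measurable (borel \<Otimes>\<^sub>M borel) \<Longrightarrow> (\<lambda>x. \<integral>\<^sup>+t. g x t \<partial>\<mu>) \<in> borel_measurable borel"
  apply (rule sigma_finite_measure.borel_measurable_nn_integral[OF sf_mu])
  by (subst measurable_cong_sets[OF sets_pair_measure_cong[OF refl sets_mu] refl])

definition "Sv x = (\<integral>\<^sup>+t. indicator {x<..} t \<partial>\<mu>)"
definition "Ps x = (\<integral>\<^sup>+t. ennreal (max 0 (t - x)) \<partial>\<mu>)"
definition "Ph x = (\<integral>\<^sup>+u. Ps u * indicator {x..} u \<partial>lborel)"

lemma Sv_eq: "Sv x = emeasure \<mu> {x<..}"
  unfolding Sv_def by (subst nn_integral_indicator) (auto simp: sets_mu)

lemma Sv_meas[measurable]: "Sv \<in> borel_measurable borel"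
  unfolding Sv_def by (rule meas_nn) (unfold indicator_def greaterThan_iff, measurable)

lemma Ps_meas[measurable]: "Ps \<in> borel_measurable borel"
  unfolding Ps_def by (rule meas_nn) measurable

lemma Ps_eq: "Ps x = (\<integral>\<^sup>+u. Sv u * indicator {x..} u \<partial>lborel)"
proof -
  have "Ps x = (\<integral>\<^sup>+t. \<integral>\<^sup>+u. indicator {x..} u * indicator {u<..} t \<partial>lborel \<partial>\<mu>)"
    unfolding Ps_def
  proof (intro nn_integral_cong)
    fix t
    have e: "(\<lambda>u. indicator {x..} u * indicator {u<..} t :: ennreal) = indicator {x..<t}"
      by (auto simp: indicator_def fun_eq_iff)
    show "ennreal (max 0 (t - x)) = (\<integral>\<^sup>+u. indicator {x..} u * indicator {u<..} t \<partial>lborel)"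
      unfolding e by (cases "x \<le> t") (auto simp: max_def)
  qed
  also have "\<dots> = (\<integral>\<^sup>+u. \<integral>\<^sup>+t. indicator {x..} u * indicator {u<..} t \<partial>\<mu> \<partial>lborel)"
    by (rule lm.Fubini') (rule meas_lm, unfold indicator_def greaterThan_iff atLeast_iff, measurable)
  also have "\<dots> = (\<integral>\<^sup>+u. Sv u * indicator {x..} u \<partial>lborel)"
    unfolding Sv_def
    by (intro nn_integral_cong, subst nn_integral_cmult) (auto simp: mult.commute)
  finally show ?thesis .
qed


lemma inner_sq: "(\<integral>\<^sup>+u. ennreal (max 0 (t-u)) * indicator {x..} u \<partial>lborel) = ennreal ((max 0 (t-x))\<^sup>2/2)"
proof (cases "x \<le> t")
  case True
  have "(\<integral>\<^sup>+u. ennreal (max 0 (t-u)) * indicator {x..} u \<partial>lborel) = (\<integral>\<^sup>+u. ennreal (t-u) * indicator {x..t} u \<partial>lborel)"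
    by (intro nn_integral_cong) (auto simp: indicator_def max_def)
  also have "\<dots> = (\<lambda>u. t*u - u\<^sup>2/2) t - (\<lambda>u. t*u - u\<^sup>2/2) x"
    by (rule nn_integral_FTC_Icc) (auto intro!: derivative_eq_intros simp: True)
  also have "\<dots> = ennreal ((max 0 (t-x))\<^sup>2/2)"
    using True by (simp add: max_def power2_eq_square field_simps)
  finally show ?thesis .
next
  case False
  then have z: "\<And>u. ennreal (max 0 (t-u)) * indicator {x..} u = 0"
    by (auto simp: indicator_def max_def)
  have e: "(\<lambda>u. ennreal (max 0 (t-u)) * indicator {x..} u) = (\<lambda>u. 0)"
    by (rule ext) (rule z)
  show ?thesis unfolding e using False by (simp add: max_def)
qed

lemma Ph_eq: "Ph x = (\<integral>\<^sup>+t. ennreal ((max 0 (t-x))\<^sup>2/2) \<partial>\<mu>)"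
proof -
  have "Ph x = (\<integral>\<^sup>+u. \<integral>\<^sup>+t. ennreal (max 0 (t-u)) * indicator {x..} u \<partial>\<mu> \<partial>lborel)"
    unfolding Ph_def Ps_def
    by (intro nn_integral_cong, subst nn_integral_multc) auto
  also have "\<dots> = (\<integral>\<^sup>+t. \<integral>\<^sup>+u. ennreal (max 0 (t-u)) * indicator {x..} u \<partial>lborel \<partial>\<mu>)"
    by (rule lm.Fubini'[symmetric]) (rule meas_lm, unfold indicator_def atLeast_iff, measurable)
  also have "\<dots> = (\<integral>\<^sup>+t. ennreal ((max 0 (t-x))\<^sup>2/2) \<partial>\<mu>)"
    by (rule nn_integral_cong, rule inner_sq)
  finally show ?thesis .
qed

lemma fm_l[measurable]: "(\<lambda>x. ennreal (f x)) \<in> borel_measurable lborel"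
  by measurable

lemma null_single: "{a} \<in> null_sets \<mu>"
proof -
  have "{a} \<in> null_sets lborel" by (simp add: null_setsI)
  then have "AE x in lborel. x \<in> {a} \<longrightarrow> ennreal (f x) = 0"
    using AE_not_in by (metis (mono_tags, lifting) eventually_mono)
  then show ?thesis unfolding D by (subst null_sets_density_iff) auto
qed

lemma AE_lb: assumes "AE v in \<mu>. P v" shows "AE v in lborel. 0 < f v \<longrightarrow> P v"
proof -
  have "AE v in density lborel (\<lambda>x. ennreal (f x)). P v" using assms D by metis
  then show ?thesis by (simp add: AE_density[OF fm_l])
qed

lemma AE_S_pos: "AE v in \<mu>. measure \<mu> {v<..} \<noteq> 0"
proof -
  define B where "B = {v. measure \<mu> {v<..} = 0}"
  have up: "v \<in> B" if "w \<in> B" "w \<le> v" for w v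
  proof -
    have "measure \<mu> {v<..} \<le> measure \<mu> {w<..}"
      using that by (intro mu.finite_measure_mono) auto
    moreover have "measure \<mu> {w<..} = 0" using that(1) by (simp add: B_def)
    moreover have "0 \<le> measure \<mu> {v<..}" by (rule measure_nonneg)
    ultimately have "measure \<mu> {v<..} = 0" by linarith
    then show ?thesis by (simp add: B_def)
  qed
  define Q where "Q = {q. q \<in> \<rat> \<and> q \<in> B}"
  have cQ: "countable Q" unfolding Q_def
    by (rule countable_subset[OF _ countable_rat]) auto
  have "(\<Union>q\<in>Q. {q<..}) \<in> null_sets \<mu>"
  proof (rule null_sets_UN'[OF cQ])
    fix q assume "q \<in> Q"
    then have "measure \<mu> {q<..} = 0" unfolding Q_def B_def by auto
    then show "{q<..} \<in> null_sets \<mu>"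
      by (intro null_setsI) (auto simp: mu.emeasure_eq_measure)
  qed
  then have N: "{Inf B} \<union> (\<Union>q\<in>Q. {q<..}) \<in> null_sets \<mu>"
    using null_single by blast
  have "B \<subseteq> {Inf B} \<union> (\<Union>q\<in>Q. {q<..})"
  proof
    fix v assume v: "v \<in> B"
    show "v \<in> {Inf B} \<union> (\<Union>q\<in>Q. {q<..})"
    proof (cases "\<exists>w\<in>B. w < v")
      case True
      then obtain w where w: "w \<in> B" "w < v" by blast
      then obtain q where q: "q \<in> \<rat>" "w < q" "q < v" using Rats_dense_in_real by blast
      then have "q \<in> Q" using up[OF w(1)] unfolding Q_def by auto
      then show ?thesis using q by auto
    next
      case False
      then have "Inf B = v" using v by (intro cInf_eq_minimum) (auto simp: not_less)
      then show ?thesis by auto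
    qed
  qed
  then show ?thesis
    by (intro AE_I'[OF N]) (auto simp: B_def)
qed

lemma AE_F_pos: "AE v in \<mu>. measure \<mu> {..v} \<noteq> 0"
proof -
  define B where "B = {v. measure \<mu> {..v} = 0}"
  have down: "v \<in> B" if "w \<in> B" "v \<le> w" for w v
  proof -
    have "measure \<mu> {..v} \<le> measure \<mu> {..w}"
      using that by (intro mu.finite_measure_mono) auto
    moreover have "measure \<mu> {..w} = 0" using that(1) by (simp add: B_def)
    moreover have "0 \<le> measure \<mu> {..v}" by (rule measure_nonneg)
    ultimately have "measure \<mu> {..v} = 0" by linarith
    then show ?thesis by (simp add: B_def)
  qed
  define Q where "Q = {q. q \<in> \<rat> \<and> q \<in> B}"
  have cQ: "countable Q" unfolding Q_def
    by (rule countable_subset[OF _ countable_rat]) auto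
  have "(\<Union>q\<in>Q. {..<q}) \<in> null_sets \<mu>"
  proof (rule null_sets_UN'[OF cQ])
    fix q assume "q \<in> Q"
    then have "measure \<mu> {..q} = 0" unfolding Q_def B_def by auto
    moreover have "measure \<mu> {..<q} \<le> measure \<mu> {..q}"
      by (intro mu.finite_measure_mono) auto
    ultimately have "measure \<mu> {..<q} = 0" using measure_nonneg[of \<mu> "{..<q}"] by linarith
    then show "{..<q} \<in> null_sets \<mu>"
      by (intro null_setsI) (auto simp: mu.emeasure_eq_measure)
  qed
  then have N: "{Sup B} \<union> (\<Union>q\<in>Q. {..<q}) \<in> null_sets \<mu>"
    using null_single by blast
  have "B \<subseteq> {Sup B} \<union> (\<Union>q\<in>Q. {..<q})"
  proof
    fix v assume v: "v \<in> B"
    show "v \<in> {Sup B} \<union> (\<Union>q\<in>Q. {..<q})"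
    proof (cases "\<exists>w\<in>B. v < w")
      case True
      then obtain w where w: "w \<in> B" "v < w" by blast
      then obtain q where q: "q \<in> \<rat>" "v < q" "q < w" using Rats_dense_in_real by blast
      then have "q \<in> Q" using down[OF w(1)] unfolding Q_def by auto
      then show ?thesis using q by auto
    next
      case False
      then have "Sup B = v" using v by (intro cSup_eq_maximum) (auto simp: not_less)
      then show ?thesis by auto
    qed
  qed
  then show ?thesis
    by (intro AE_I'[OF N]) (auto simp: B_def)
qed

lemma AE_f_zero: "AE v in lborel. measure \<mu> {v<..} = 0 \<longrightarrow> f v = 0"
  using AE_lb[OF AE_S_pos] by eventually_elim (use fnn in \<open>auto simp: order_le_less\<close>)

lemma Sv_real: "Sv x = ennreal (measure \<mu> {x<..})"
  by (simp add: Sv_eq mu.emeasure_eq_measure)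

lemma mu_dens: "A \<in> sets borel \<Longrightarrow> emeasure \<mu> A = (\<integral>\<^sup>+z. ennreal (f z) * indicator A z \<partial>lborel)"
  by (simp add: D emeasure_density)

lemma Ps_split: "x \<le> u \<Longrightarrow> Ps x = Ps u + (\<integral>\<^sup>+v. Sv v * indicator {x..<u} v \<partial>lborel)"
proof -
  assume xu: "x \<le> u"
  have "\<And>v. Sv v * indicator {x..} v = Sv v * indicator {u..} v + Sv v * indicator {x..<u} v"
    using xu by (auto simp: indicator_def)
  then show ?thesis unfolding Ps_eq[of x] Ps_eq[of u]
    by (simp add: nn_integral_add)
qed

lemma Sv_split: "x \<le> u \<Longrightarrow> Sv x = Sv u + emeasure \<mu> {x<..u}"
proof -
  assume xu: "x \<le> u"
  have "{x<..} = {u<..} \<union> {x<..u}" using xu by auto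
  moreover have "emeasure \<mu> {u<..} + emeasure \<mu> {x<..u} = emeasure \<mu> ({u<..} \<union> {x<..u})"
    by (rule plus_emeasure) auto
  ultimately show ?thesis unfolding Sv_eq by simp
qed

context
  fixes N assumes Nn: "N \<in> null_sets lborel"
    and C: "\<And>z v. z \<notin> N \<Longrightarrow> v \<notin> N \<Longrightarrow> z \<le> v \<Longrightarrow> 0 < measure \<mu> {..z} \<Longrightarrow> 0 < measure \<mu> {v<..}
       \<Longrightarrow> f v * measure \<mu> {z<..} \<le> f z * measure \<mu> {v<..}"
begin

lemma K: assumes z: "z \<notin> N" "0 < measure \<mu> {..z}" "z \<le> u"
  shows "Sv z * Sv u \<le> ennreal (f z) * Ps u"
proof -
  have "Sv z * Sv u = (\<integral>\<^sup>+v. Sv z * (ennreal (f v) * indicator {u<..} v) \<partial>lborel)"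
    by (subst nn_integral_cmult) (auto simp: Sv_eq[of u] mu_dens)
  also have "\<dots> \<le> (\<integral>\<^sup>+v. ennreal (f z) * (Sv v * indicator {u..} v) \<partial>lborel)"
  proof (rule nn_integral_mono_AE)
    have "AE v in lborel. v \<notin> N" by (rule AE_not_in[OF Nn])
    with AE_f_zero show "AE v in lborel. Sv z * (ennreal (f v) * indicator {u<..} v) \<le> ennreal (f z) * (Sv v * indicator {u..} v)"
    proof eventually_elim
      case (elim v)
      show ?case
      proof (cases "u < v")
        case False then show ?thesis by (simp add: indicator_def)
      next
        case True
        show ?thesis
        proof (cases "measure \<mu> {v<..} = 0")
          case True then show ?thesis using elim by simp
        next
          case False
          then have vp: "0 < measure \<mu> {v<..}" using measure_nonneg[of \<mu> "{v<..}"] by linarith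
          have "f v * measure \<mu> {z<..} \<le> f z * measure \<mu> {v<..}"
            using C[OF z(1) elim(2) _ z(2) vp] z(3) True by simp
          then have "ennreal (measure \<mu> {z<..}) * ennreal (f v) \<le> ennreal (f z) * ennreal (measure \<mu> {v<..})"
            by (simp add: ennreal_mult'[symmetric] fnn mult.commute ennreal_leI)
          then show ?thesis using True by (simp add: Sv_real indicator_def)
        qed
      qed
    qed
  qed
  also have "\<dots> = ennreal (f z) * Ps u"
    by (subst nn_integral_cmult) (simp_all add: Ps_eq)
  finally show ?thesis .
qed

lemma IMRL: assumes x: "0 < measure \<mu> {..x}" "x \<le> u"
  shows "Ps x * Sv u \<le> Sv x * Ps u"
proof -
  define J where "J = (\<integral>\<^sup>+v. Sv v * indicator {x..<u} v \<partial>lborel)"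
  define E where "E = emeasure \<mu> {x<..u}"
  have 1: "Ps x * Sv u = Ps u * Sv u + J * Sv u"
    unfolding J_def Ps_split[OF x(2)] by (simp add: distrib_right)
  have 2: "Sv x * Ps u = Sv u * Ps u + E * Ps u"
    unfolding E_def Sv_split[OF x(2)] by (simp add: distrib_right)
  have "J * Sv u = (\<integral>\<^sup>+v. Sv v * indicator {x..<u} v * Sv u \<partial>lborel)"
    unfolding J_def by (subst nn_integral_multc) auto
  also have "\<dots> \<le> (\<integral>\<^sup>+v. ennreal (f v) * indicator {x<..u} v * Ps u \<partial>lborel)"
  proof (rule nn_integral_mono_AE)
    have "{x} \<in> null_sets lborel" by (simp add: null_setsI)
    from AE_not_in[OF this] AE_not_in[OF Nn]
    show "AE v in lborel. Sv v * indicator {x..<u} v * Sv u \<le> ennreal (f v) * indicator {x<..u} v * Ps u"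
    proof eventually_elim
      case (elim v)
      show ?case
      proof (cases "x < v \<and> v < u")
        case True
        have "measure \<mu> {..x} \<le> measure \<mu> {..v}"
          using True by (intro mu.finite_measure_mono) auto
        then have "0 < measure \<mu> {..v}" using x by linarith
        from K[OF elim(2) this, of u] True
        show ?thesis by (simp add: indicator_def)
      next
        case False
        then show ?thesis using elim by (auto simp: indicator_def)
      qed
    qed
  qed
  also have "\<dots> = E * Ps u"
    unfolding E_def by (subst nn_integral_multc) (auto simp: mu_dens)
  finally have "J * Sv u \<le> E * Ps u" .
  then show ?thesis unfolding 1 2 by (simp add: mult.commute add_left_mono)
qed

lemma L4: assumes x: "0 < measure \<mu> {..x}"
  shows "Ps x * Ps x \<le> Sv x * Ph x"
proof -
  have "Ps x * Ps x = (\<integral>\<^sup>+u. Ps x * (Sv u * indicator {x..} u) \<partial>lborel)"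
    by (subst nn_integral_cmult) (auto simp: Ps_eq[of x])
  also have "\<dots> \<le> (\<integral>\<^sup>+u. Sv x * (Ps u * indicator {x..} u) \<partial>lborel)"
  proof (intro nn_integral_mono)
    fix u
    show "Ps x * (Sv u * indicator {x..} u) \<le> Sv x * (Ps u * indicator {x..} u)"
      using IMRL[OF x, of u] by (auto simp: indicator_def)
  qed
  also have "\<dots> = Sv x * Ph x"
    unfolding Ph_def by (subst nn_integral_cmult) auto
  finally show ?thesis .
qed

end


lemma I1: "integrable \<mu> (\<lambda>x. x)"
proof -
  have a: "integrable \<mu> (\<lambda>x. 1 + x\<^sup>2)" using I2 by simp
  have b: "AE x in \<mu>. norm x \<le> norm (1 + x\<^sup>2)"
  proof (intro AE_I2)
    fix x :: real
    have "\<bar>x\<bar> \<le> 1 + x\<^sup>2"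
    proof (cases "\<bar>x\<bar> \<le> 1")
      case True then show ?thesis by (smt (verit) zero_le_power2)
    next
      case False
      then have "\<bar>x\<bar> * 1 \<le> \<bar>x\<bar> * \<bar>x\<bar>" by (intro mult_left_mono) auto
      then show ?thesis by (simp add: power2_eq_square abs_mult_self_eq)
    qed
    then show "norm x \<le> norm (1 + x\<^sup>2)" by simp
  qed
  show ?thesis by (rule Bochner_Integration.integrable_bound[OF a _ b]) simp
qed

lemma Iabs: "integrable \<mu> (\<lambda>t. \<bar>x - t\<bar>)"
  using I1 by (intro integrable_abs) simp

definition "G1 x = (\<integral>\<^sup>+t. ennreal \<bar>x - t\<bar> \<partial>\<mu>)"
definition "R1 x = (\<integral>\<^sup>+t. ennreal (max 0 (x - t)) \<partial>\<mu>)"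
definition "G2 x = (\<integral>\<^sup>+t. ennreal ((x - t)\<^sup>2) \<partial>\<mu>)"
definition "H2 x = (\<integral>\<^sup>+t. ennreal ((max 0 (t - x))\<^sup>2) \<partial>\<mu>)"
definition "R2 x = (\<integral>\<^sup>+t. ennreal ((max 0 (x - t))\<^sup>2) \<partial>\<mu>)"

lemma G1_meas[measurable]: "G1 \<in> borel_measurable borel"
  unfolding G1_def by (rule meas_nn) measurable
lemma R1_meas[measurable]: "R1 \<in> borel_measurable borel"
  unfolding R1_def by (rule meas_nn) measurable
lemma G2_meas[measurable]: "G2 \<in> borel_measurable borel"
  unfolding G2_def by (rule meas_nn) measurable
lemma H2_meas[measurable]: "H2 \<in> borel_measurable borel"
  unfolding H2_def by (rule meas_nn) measurable
lemma R2_meas[measurable]: "R2 \<in> borel_measurable borel"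
  unfolding R2_def by (rule meas_nn) measurable
lemma Ph_meas[measurable]: "Ph \<in> borel_measurable borel"
proof -
  have "Ph = (\<lambda>x. H2 x / 2)"
  proof
    fix x
    have "Ph x = (\<integral>\<^sup>+t. ennreal ((max 0 (t - x))\<^sup>2) / 2 \<partial>\<mu>)"
      unfolding Ph_eq by (intro nn_integral_cong) (simp add: ennreal_divide_numeral)
    then show "Ph x = H2 x / 2" unfolding H2_def by (simp add: nn_integral_divide)
  qed
  then show ?thesis by simp
qed

lemma two_half: "2 * ennreal (y/2) = ennreal y"
proof (cases "0 \<le> y")
  case True then show ?thesis using ennreal_mult[of 2 "y/2"] by simp
next
  case False then show ?thesis by (simp add: ennreal_neg)
qed

lemma mu_univ: "measure \<mu> UNIV = 1" using mu.prob_space by simp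

lemma H2_eq: "H2 x = 2 * Ph x"
proof -
  have "2 * Ph x = (\<integral>\<^sup>+t. 2 * ennreal ((max 0 (t-x))\<^sup>2/2) \<partial>\<mu>)"
    unfolding Ph_eq by (subst nn_integral_cmult) auto
  also have "\<dots> = H2 x" unfolding H2_def
    by (intro nn_integral_cong) (simp add: two_half)
  finally show ?thesis by simp
qed

lemma G1_split: "G1 x = Ps x + R1 x"
proof -
  have e: "ennreal \<bar>x - t\<bar> = ennreal (max 0 (t - x)) + ennreal (max 0 (x - t))" for t
    by (cases "x \<le> t") (simp_all add: max_def)
  have "G1 x = (\<integral>\<^sup>+t. ennreal (max 0 (t - x)) + ennreal (max 0 (x - t)) \<partial>\<mu>)"
    unfolding G1_def by (rule nn_integral_cong) (rule e)
  also have "\<dots> = Ps x + R1 x" unfolding Ps_def R1_def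
    by (rule nn_integral_add) measurable
  finally show ?thesis .
qed

lemma G2_split: "G2 x = H2 x + R2 x"
proof -
  have e: "ennreal ((x - t)\<^sup>2) = ennreal ((max 0 (t - x))\<^sup>2) + ennreal ((max 0 (x - t))\<^sup>2)" for t
    by (cases "x \<le> t") (simp_all add: max_def power2_commute)
  have "G2 x = (\<integral>\<^sup>+t. ennreal ((max 0 (t - x))\<^sup>2) + ennreal ((max 0 (x - t))\<^sup>2) \<partial>\<mu>)"
    unfolding G2_def by (rule nn_integral_cong) (rule e)
  also have "\<dots> = H2 x + R2 x" unfolding H2_def R2_def
    by (rule nn_integral_add) measurable
  finally show ?thesis .
qed

lemma intR1: "(\<integral>\<^sup>+x. R1 x \<partial>\<mu>) = (\<integral>\<^sup>+x. Ps x \<partial>\<mu>)"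
  unfolding R1_def Ps_def
  by (rule mm.Fubini'[symmetric]) (rule meas_mm, measurable)

lemma intR2: "(\<integral>\<^sup>+x. R2 x \<partial>\<mu>) = (\<integral>\<^sup>+x. H2 x \<partial>\<mu>)"
  unfolding R2_def H2_def
  by (rule mm.Fubini'[symmetric]) (rule meas_mm, measurable)

lemma intG1: "(\<integral>\<^sup>+x. G1 x \<partial>\<mu>) = 2 * (\<integral>\<^sup>+x. Ps x \<partial>\<mu>)"
  unfolding G1_split by (simp add: nn_integral_add intR1 mult_2)

lemma intG2: "(\<integral>\<^sup>+x. G2 x \<partial>\<mu>) = 4 * (\<integral>\<^sup>+x. Ph x \<partial>\<mu>)"
proof -
  have "(\<integral>\<^sup>+x. G2 x \<partial>\<mu>) = 2 * (\<integral>\<^sup>+x. H2 x \<partial>\<mu>)"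
    unfolding G2_split by (simp add: nn_integral_add intR2 mult_2)
  also have "(\<integral>\<^sup>+x. H2 x \<partial>\<mu>) = 2 * (\<integral>\<^sup>+x. Ph x \<partial>\<mu>)"
    unfolding H2_eq by (simp add: nn_integral_cmult)
  finally show ?thesis by (simp add: mult.assoc[symmetric])
qed

lemma Lt_meas[measurable]: "(\<lambda>x. \<integral>\<^sup>+t. indicator {..<x} t \<partial>\<mu>) \<in> borel_measurable borel"
  by (rule meas_nn) (unfold indicator_def lessThan_iff, measurable)

lemma half: "2 * (\<integral>\<^sup>+x. Sv x \<partial>\<mu>) \<le> 1"
proof -
  have "(\<integral>\<^sup>+x. Sv x \<partial>\<mu>) = (\<integral>\<^sup>+x. \<integral>\<^sup>+t. indicator {x<..} t \<partial>\<mu> \<partial>\<mu>)"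
    unfolding Sv_def ..
  also have "\<dots> = (\<integral>\<^sup>+t. \<integral>\<^sup>+x. indicator {x<..} t \<partial>\<mu> \<partial>\<mu>)"
    by (rule mm.Fubini'[symmetric]) (rule meas_mm, unfold indicator_def greaterThan_iff, measurable)
  also have "\<dots> = (\<integral>\<^sup>+x. \<integral>\<^sup>+t. indicator {..<x} t \<partial>\<mu> \<partial>\<mu>)"
    by (intro nn_integral_cong) (simp add: indicator_def)
  finally have e: "(\<integral>\<^sup>+x. Sv x \<partial>\<mu>) = (\<integral>\<^sup>+x. \<integral>\<^sup>+t. indicator {..<x} t \<partial>\<mu> \<partial>\<mu>)" .
  have "2 * (\<integral>\<^sup>+x. Sv x \<partial>\<mu>) = (\<integral>\<^sup>+x. Sv x \<partial>\<mu>) + (\<integral>\<^sup>+x. \<integral>\<^sup>+t. indicator {..<x} t \<partial>\<mu> \<partial>\<mu>)"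
    using e by (simp add: mult_2)
  also have "\<dots> = (\<integral>\<^sup>+x. Sv x + (\<integral>\<^sup>+t. indicator {..<x} t \<partial>\<mu>) \<partial>\<mu>)"
    by (rule nn_integral_add[symmetric]) measurable
  also have "\<dots> = (\<integral>\<^sup>+x. \<integral>\<^sup>+t. indicator {x<..} t + indicator {..<x} t \<partial>\<mu> \<partial>\<mu>)"
    unfolding Sv_def by (intro nn_integral_cong) (rule nn_integral_add[symmetric], auto)
  also have "\<dots> \<le> (\<integral>\<^sup>+x. \<integral>\<^sup>+t. 1 \<partial>\<mu> \<partial>\<mu>)"
    by (intro nn_integral_mono) (auto simp: indicator_def)
  also have "\<dots> = 1" using mu.emeasure_space_1 by simp
  finally show ?thesis .
qed

lemma G1_fin: "G1 x = ennreal (\<integral>t. \<bar>x - t\<bar> \<partial>\<mu>)"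
  unfolding G1_def by (rule nn_integral_eq_integral[OF Iabs]) auto

lemma G2_fin: "G2 x = ennreal (x\<^sup>2 - 2 * x * (\<integral>t. t \<partial>\<mu>) + (\<integral>t. t\<^sup>2 \<partial>\<mu>))"
proof -
  have eq: "(\<lambda>t. (x - t)\<^sup>2) = (\<lambda>t. x\<^sup>2 - 2 * x * t + t\<^sup>2)"
    by (simp add: power2_eq_square algebra_simps)
  have int: "integrable \<mu> (\<lambda>t. x\<^sup>2 - 2 * x * t + t\<^sup>2)"
    using I1 I2 by auto
  have nn: "0 \<le> x\<^sup>2 - 2 * x * t + t\<^sup>2" for t
  proof -
    have "x\<^sup>2 - 2 * x * t + t\<^sup>2 = (x - t)\<^sup>2" by (simp add: power2_eq_square algebra_simps)
    then show ?thesis by simp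
  qed
  have "G2 x = (\<integral>\<^sup>+t. ennreal (x\<^sup>2 - 2 * x * t + t\<^sup>2) \<partial>\<mu>)"
    unfolding G2_def by (rule nn_integral_cong) (simp add: power2_eq_square algebra_simps)
  also have "\<dots> = ennreal (\<integral>t. x\<^sup>2 - 2 * x * t + t\<^sup>2 \<partial>\<mu>)"
    by (rule nn_integral_eq_integral[OF int]) (simp add: nn)
  also have "(\<integral>t. x\<^sup>2 - 2 * x * t + t\<^sup>2 \<partial>\<mu>) = x\<^sup>2 - 2 * x * (\<integral>t. t \<partial>\<mu>) + (\<integral>t. t\<^sup>2 \<partial>\<mu>)"
    using I1 I2 by (simp add: mu_univ)
  finally show ?thesis .
qed


lemma G1_lt: "G1 x < \<infinity>" by (simp add: G1_fin)

lemma Ps_lt: "Ps x < \<infinity>"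
  using G1_lt[of x] unfolding G1_split by (simp add: top_unique)

lemma Sv_lt: "Sv x < \<infinity>" by (simp add: Sv_real)

lemma intG1_fin: "(\<integral>\<^sup>+x. G1 x \<partial>\<mu>) < \<infinity>"
proof -
  define a where "a = (\<integral>t. \<bar>t\<bar> \<partial>\<mu>)"
  have ia: "integrable \<mu> (\<lambda>t. \<bar>t\<bar>)" using I1 by (rule integrable_abs)
  have "G1 x \<le> ennreal (\<bar>x\<bar> + a)" for x
  proof -
    have "(\<integral>t. \<bar>x - t\<bar> \<partial>\<mu>) \<le> (\<integral>t. \<bar>x\<bar> + \<bar>t\<bar> \<partial>\<mu>)"
      using Iabs ia by (intro integral_mono) auto
    also have "\<dots> = \<bar>x\<bar> + a" using ia by (simp add: a_def mu_univ)
    finally show ?thesis unfolding G1_fin by (simp add: ennreal_leI)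
  qed
  then have "(\<integral>\<^sup>+x. G1 x \<partial>\<mu>) \<le> (\<integral>\<^sup>+x. ennreal (\<bar>x\<bar> + a) \<partial>\<mu>)"
    by (intro nn_integral_mono) auto
  also have "\<dots> = ennreal (\<integral>x. \<bar>x\<bar> + a \<partial>\<mu>)"
    using ia by (intro nn_integral_eq_integral) (auto simp: a_def integral_nonneg)
  finally show ?thesis by (metis ennreal_less_top infinity_ennreal_def le_less_trans)
qed

lemma GMD_eq: "(\<integral>x. (\<integral>t. \<bar>x - t\<bar> \<partial>\<mu>) \<partial>\<mu>) = enn2real (\<integral>\<^sup>+x. G1 x \<partial>\<mu>)"
proof -
  have g: "(\<lambda>x. \<integral>t. \<bar>x - t\<bar> \<partial>\<mu>) = (\<lambda>x. enn2real (G1 x))"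
    by (rule ext) (simp add: G1_fin integral_nonneg)
  have "(\<integral>x. enn2real (G1 x) \<partial>\<mu>) = enn2real (\<integral>\<^sup>+x. ennreal (enn2real (G1 x)) \<partial>\<mu>)"
    by (rule integral_eq_nn_integral) auto
  also have "(\<integral>\<^sup>+x. ennreal (enn2real (G1 x)) \<partial>\<mu>) = (\<integral>\<^sup>+x. G1 x \<partial>\<mu>)"
    by (intro nn_integral_cong) (simp add: G1_fin integral_nonneg)
  finally show ?thesis unfolding g .
qed

lemma core:
  assumes C0: "\<exists>N\<in>null_sets lborel. \<forall>z v. z \<notin> N \<longrightarrow> v \<notin> N \<longrightarrow> z \<le> v \<longrightarrow> 0 < measure \<mu> {..z}
      \<longrightarrow> 0 < measure \<mu> {v<..} \<longrightarrow> f v * measure \<mu> {z<..} \<le> f z * measure \<mu> {v<..}"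
  shows "(\<integral>x. (\<integral>t. \<bar>x - t\<bar> \<partial>\<mu>) \<partial>\<mu>)\<^sup>2 \<le> (\<integral>x. (x - (\<integral>t. t \<partial>\<mu>))\<^sup>2 \<partial>\<mu>)"
proof -
  obtain N where Nn: "N \<in> null_sets lborel" and C: "\<And>z v. z \<notin> N \<Longrightarrow> v \<notin> N \<Longrightarrow> z \<le> v \<Longrightarrow> 0 < measure \<mu> {..z}
      \<Longrightarrow> 0 < measure \<mu> {v<..} \<Longrightarrow> f v * measure \<mu> {z<..} \<le> f z * measure \<mu> {v<..}"
    using C0 by blast
  define P where "P = (\<integral>\<^sup>+x. Ps x \<partial>\<mu>)"
  define Q where "Q = (\<integral>\<^sup>+x. Ph x \<partial>\<mu>)"
  define T where "T = (\<integral>\<^sup>+x. Sv x \<partial>\<mu>)"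
  define m where "m = (\<integral>t. t \<partial>\<mu>)"
  define m2 where "m2 = (\<integral>t. t\<^sup>2 \<partial>\<mu>)"
  have V: "(\<integral>x. (x - m)\<^sup>2 \<partial>\<mu>) = m2 - m\<^sup>2"
    unfolding m_def m2_def by (rule mu.variance_eq[OF I1 I2])
  have Vnn: "0 \<le> m2 - m\<^sup>2" unfolding V[symmetric] by (rule Bochner_Integration.integral_nonneg) simp
  have "(\<integral>\<^sup>+x. G2 x \<partial>\<mu>) = (\<integral>\<^sup>+x. ennreal (x\<^sup>2 - 2 * x * m + m2) \<partial>\<mu>)"
    unfolding G2_fin m_def m2_def ..
  also have "\<dots> = ennreal (\<integral>x. x\<^sup>2 - 2 * x * m + m2 \<partial>\<mu>)"
  proof (rule nn_integral_eq_integral)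
    show "integrable \<mu> (\<lambda>x. x\<^sup>2 - 2 * x * m + m2)" using I1 I2 by auto
    have nn: "0 \<le> x\<^sup>2 - 2 * x * m + m2" for x
    proof -
      have "x\<^sup>2 - 2 * x * m + m2 = (x - m)\<^sup>2 + (m2 - m\<^sup>2)"
        by (simp add: power2_eq_square algebra_simps)
      then show ?thesis using Vnn by (metis add_nonneg_nonneg zero_le_power2)
    qed
    show "AE x in \<mu>. 0 \<le> x\<^sup>2 - 2 * x * m + m2" by (intro AE_I2 nn)
  qed
  also have "(\<integral>x. x\<^sup>2 - 2 * x * m + m2 \<partial>\<mu>) = 2 * (m2 - m\<^sup>2)"
    using I1 I2 by (simp add: mu_univ m_def m2_def power2_eq_square)
  finally have Q4: "4 * Q = ennreal (2 * (m2 - m\<^sup>2))" unfolding Q_def intG2 by simp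
  then have "Q < \<infinity>" by (auto simp: top_unique less_top[symmetric] ennreal_mult_eq_top_iff)
  then obtain q where q: "Q = ennreal q" "0 \<le> q" by (cases Q) auto
  have "ennreal (4 * q) = 4 * ennreal q" using ennreal_mult[of 4 q] q(2) by simp
  then have "ennreal (4 * q) = ennreal (2 * (m2 - m\<^sup>2))" using Q4 q(1) by simp
  then have q2: "4 * q = 2 * (m2 - m\<^sup>2)"
    using Vnn q(2) by (subst (asm) ennreal_inj) auto
  have "2 * P < \<infinity>" using intG1_fin unfolding intG1 P_def .
  then have "P < \<infinity>" by (auto simp: top_unique less_top[symmetric] ennreal_mult_eq_top_iff)
  then obtain p where p: "P = ennreal p" "0 \<le> p" by (cases P) auto
  have GMD: "(\<integral>x. (\<integral>t. \<bar>x - t\<bar> \<partial>\<mu>) \<partial>\<mu>) = 2 * p"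
    unfolding GMD_eq intG1 P_def[symmetric] p by (simp add: enn2real_mult p(2))
  have "T < \<infinity>" using half unfolding T_def[symmetric]
    by (auto simp: top_unique less_top[symmetric] ennreal_mult_eq_top_iff)
  then obtain \<tau> where tau: "T = ennreal \<tau>" "0 \<le> \<tau>" by (cases T) auto
  have "ennreal (2 * \<tau>) \<le> ennreal 1"
    using half ennreal_mult[of 2 \<tau>] tau unfolding T_def[symmetric] by simp
  then have tau2: "2 * \<tau> \<le> 1" by (simp add: ennreal_le_iff)
  define c where "c = 2 * p"
  have c0: "0 \<le> c" using p by (simp add: c_def)
  have "AE x in \<mu>. 2 * ennreal c * Ps x \<le> ennreal c * ennreal c * Sv x + Ph x"
    using AE_F_pos
  proof eventually_elim
    case (elim x)
    then have "0 < measure \<mu> {..x}" using measure_nonneg[of \<mu> "{..x}"] by linarith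
    from L4[OF Nn C this] show ?case
      by (rule amgm_enn[OF _ Ps_lt Sv_lt c0])
  qed
  then have "(\<integral>\<^sup>+x. 2 * ennreal c * Ps x \<partial>\<mu>) \<le> (\<integral>\<^sup>+x. ennreal c * ennreal c * Sv x + Ph x \<partial>\<mu>)"
    by (rule nn_integral_mono_AE)
  then have "2 * ennreal c * P \<le> ennreal c * ennreal c * T + Q"
    unfolding P_def T_def Q_def
    by (simp add: nn_integral_add nn_integral_cmult)
  moreover have "2 * ennreal c * P = ennreal (2 * c * p)" using p c0 by (simp add: ennreal_mult)
  moreover have "ennreal c * ennreal c * T + Q = ennreal (c * c * \<tau> + q)"
    using tau q c0 by (simp add: ennreal_mult ennreal_plus)
  ultimately have E: "ennreal (2 * c * p) \<le> ennreal (c * c * \<tau> + q)" by simp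
  have y0: "0 \<le> c * c * \<tau> + q" using q tau c0 by simp
  have "2 * c * p \<le> c * c * \<tau> + q" using E ennreal_le_iff[OF y0] by blast
  then have "4 * p\<^sup>2 \<le> 4 * p\<^sup>2 * \<tau> + q" by (simp add: c_def power2_eq_square algebra_simps)
  moreover have "4 * p\<^sup>2 * \<tau> \<le> 2 * p\<^sup>2"
    using tau2 mult_left_mono[OF tau2, of "2 * p\<^sup>2"] by (simp add: algebra_simps)
  ultimately have "2 * p\<^sup>2 \<le> q" by linarith
  then show ?thesis unfolding GMD m_def[symmetric] V using q2 by (simp add: power2_eq_square)
qed

end



lemma transfer_gv:
  fixes M :: "'a measure" and T :: "'a \<Rightarrow> real"
  assumes Mp: "prob_space M" and Tm[measurable]: "T \<in> measurable M lborel"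
  shows "(\<integral>\<omega>. (\<integral>\<omega>'. \<bar>T \<omega> - T \<omega>'\<bar> \<partial>M) \<partial>M) = (\<integral>x. (\<integral>t. \<bar>x - t\<bar> \<partial>distr M lborel T) \<partial>distr M lborel T)"
    and "(\<integral>\<omega>. (T \<omega> - (\<integral>\<omega>'. T \<omega>' \<partial>M))\<^sup>2 \<partial>M) = (\<integral>x. (x - (\<integral>t. t \<partial>distr M lborel T))\<^sup>2 \<partial>distr M lborel T)"
proof -
  let ?\<nu> = "distr M lborel T"
  have Tb[measurable]: "T \<in> borel_measurable M" using Tm by simp
  interpret M: prob_space M by (rule Mp)
  interpret \<nu>: prob_space ?\<nu> by (rule M.prob_space_distr) simp
  have sn: "sets ?\<nu> = sets borel" by simp
  have gm: "(\<lambda>x. \<integral>t. \<bar>x - t\<bar> \<partial>?\<nu>) \<in> borel_measurable borel"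
    apply (rule \<nu>.borel_measurable_lebesgue_integral)
    apply (subst measurable_cong_sets[OF sets_pair_measure_cong[OF refl sn] refl])
    by measurable
  have inner: "(\<integral>\<omega>'. \<bar>a - T \<omega>'\<bar> \<partial>M) = (\<integral>t. \<bar>a - t\<bar> \<partial>?\<nu>)" for a
    by (rule integral_distr[symmetric]) auto
  have "(\<integral>\<omega>. (\<integral>\<omega>'. \<bar>T \<omega> - T \<omega>'\<bar> \<partial>M) \<partial>M) = (\<integral>\<omega>. (\<lambda>x. \<integral>t. \<bar>x - t\<bar> \<partial>?\<nu>) (T \<omega>) \<partial>M)"
    by (simp add: inner)
  also have "\<dots> = (\<integral>x. (\<integral>t. \<bar>x - t\<bar> \<partial>?\<nu>) \<partial>?\<nu>)"
    by (rule integral_distr[symmetric]) (auto simp: gm)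
  finally show "(\<integral>\<omega>. (\<integral>\<omega>'. \<bar>T \<omega> - T \<omega>'\<bar> \<partial>M) \<partial>M) = (\<integral>x. (\<integral>t. \<bar>x - t\<bar> \<partial>?\<nu>) \<partial>?\<nu>)" .
  have m: "(\<integral>\<omega>'. T \<omega>' \<partial>M) = (\<integral>t. t \<partial>?\<nu>)"
    by (rule integral_distr[symmetric]) auto
  show "(\<integral>\<omega>. (T \<omega> - (\<integral>\<omega>'. T \<omega>' \<partial>M))\<^sup>2 \<partial>M) = (\<integral>x. (x - (\<integral>t. t \<partial>?\<nu>))\<^sup>2 \<partial>?\<nu>)"
    unfolding m by (rule integral_distr[symmetric]) auto
qed


lemma measure_open_closed:
  assumes "{a} \<in> null_sets M" "{a..} \<in> sets M"
  shows "measure M {a<..} = measure M {(a::real)..}"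
proof -
  have "{a<..} = {a..} - {a}" by auto
  then show ?thesis using measure_Diff_null_set[OF assms(2) assms(1)] by simp
qed

lemma measure_open_closed2:
  assumes "{a} \<in> null_sets M" "{..a} \<in> sets M"
  shows "measure M {..<a} = measure M {..(a::real)}"
proof -
  have "{..<a} = {..a} - {a}" by auto
  then show ?thesis using measure_Diff_null_set[OF assms(2) assms(1)] by simp
qed

theorem theorem1:
  fixes M :: "'a measure" and X :: "'a \<Rightarrow> real" and f :: "real \<Rightarrow> real"
  assumes "prob_space M"
    and "\<And>x. 0 \<le> f x"
    and "distributed M lborel X (\<lambda>x. ennreal (f x))"
    and "integrable M (\<lambda>\<omega>. (X \<omega>)\<^sup>2)"
    and "ae_antimono_on (supp_region M X) (hazard_rate M X f)
         \<or> ae_mono_on (supp_region M X) (rev_hazard_rate M X f)"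
  shows "sqrt (prob_space.variance M X) \<ge> (\<integral>\<omega>. (\<integral>\<omega>'. \<bar>X \<omega> - X \<omega>'\<bar> \<partial>M) \<partial>M)"
proof -
  interpret M: prob_space M by (rule assms(1))
  have Xm[measurable]: "X \<in> measurable M lborel" using distributed_measurable[OF assms(3)] .
  have Xb[measurable]: "X \<in> borel_measurable M" using Xm by simp
  have fe: "(\<lambda>x. ennreal (f x)) \<in> borel_measurable borel"
    using distributed_borel_measurable[OF assms(3)] by simp
  have fm[measurable]: "f \<in> borel_measurable borel"
  proof -
    have "(\<lambda>x. enn2real (ennreal (f x))) \<in> borel_measurable borel" using fe by measurable
    moreover have "(\<lambda>x. enn2real (ennreal (f x))) = f" by (rule ext) (simp add: assms(2))
    ultimately show ?thesis by simp
  qed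
  define \<mu> where "\<mu> = distr M lborel X"
  have D: "\<mu> = density lborel (\<lambda>x. ennreal (f x))"
    using assms(3) unfolding distributed_def \<mu>_def by simp
  have P\<mu>: "prob_space \<mu>" unfolding \<mu>_def by (rule M.prob_space_distr) simp
  interpret mu: prob_space \<mu> by (rule P\<mu>)
  have sm: "sets \<mu> = sets borel" unfolding \<mu>_def by simp
  have spm: "space \<mu> = UNIV" unfolding \<mu>_def by simp
  have I2\<mu>: "integrable \<mu> (\<lambda>x. x\<^sup>2)" unfolding \<mu>_def using assms(4)
    by (subst integrable_distr_eq) auto
  note tr = transfer_gv[OF assms(1) Xm, folded \<mu>_def]
  have cdf: "cdf_of M X z = measure \<mu> {..z}" for z
  proof -
    have "{\<omega> \<in> space M. X \<omega> \<le> z} = X -` {..z} \<inter> space M" by auto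
    then show ?thesis unfolding cdf_of_def \<mu>_def by (subst measure_distr) auto
  qed
  have scdf: "1 - cdf_of M X z = measure \<mu> {z<..}" for z
  proof -
    have "measure \<mu> (space \<mu> - {..z}) = 1 - measure \<mu> {..z}"
      by (rule mu.prob_compl) (simp add: sm)
    moreover have "space \<mu> - {..z} = {z<..}" unfolding \<mu>_def by auto
    ultimately show ?thesis by (simp add: cdf)
  qed
  have nsing: "{a} \<in> null_sets \<mu>" for a by (rule null_single[OF P\<mu> D fm assms(2) I2\<mu>])
  have key: "(\<integral>x. (\<integral>t. \<bar>x - t\<bar> \<partial>\<mu>) \<partial>\<mu>)\<^sup>2 \<le> (\<integral>x. (x - (\<integral>t. t \<partial>\<mu>))\<^sup>2 \<partial>\<mu>)"
    using assms(5)
  proof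
    assume H: "ae_antimono_on (supp_region M X) (hazard_rate M X f)"
    from H obtain N where N: "N \<in> null_sets lborel"
      and mono: "\<forall>x\<in>supp_region M X - N. \<forall>y\<in>supp_region M X - N. x \<le> y \<longrightarrow> hazard_rate M X f y \<le> hazard_rate M X f x"
      unfolding ae_antimono_on_def by blast
    show ?thesis
    proof (rule core[OF P\<mu> D fm assms(2) I2\<mu>], intro bexI[OF _ N] allI impI)
      fix z v assume z: "z \<notin> N" "v \<notin> N" "z \<le> v" "0 < measure \<mu> {..z}" "0 < measure \<mu> {v<..}"
      have Fzv: "measure \<mu> {..z} \<le> measure \<mu> {..v}"
        using z(3) by (intro mu.finite_measure_mono) (auto simp: sm)
      have Szv: "measure \<mu> {v<..} \<le> measure \<mu> {z<..}"
        using z(3) by (intro mu.finite_measure_mono) (auto simp: sm)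
      have zA: "z \<in> supp_region M X - N" using z Szv scdf[of z] cdf[of z]
        unfolding supp_region_def by auto
      have vA: "v \<in> supp_region M X - N" using z Fzv scdf[of v] cdf[of v]
        unfolding supp_region_def by auto
      have "hazard_rate M X f v \<le> hazard_rate M X f z" using mono zA vA z(3) by blast
      then have "f v / measure \<mu> {v<..} \<le> f z / measure \<mu> {z<..}"
        unfolding hazard_rate_def scdf .
      moreover have "0 < measure \<mu> {z<..}" using z Szv by linarith
      ultimately show "f v * measure \<mu> {z<..} \<le> f z * measure \<mu> {v<..}"
        using z(5) by (simp add: field_simps)
    qed
  next
    assume H: "ae_mono_on (supp_region M X) (rev_hazard_rate M X f)"
    from H obtain N where N: "N \<in> null_sets lborel"
      and mono: "\<forall>x\<in>supp_region M X - N. \<forall>y\<in>supp_region M X - N. x \<le> y \<longrightarrow> rev_hazard_rate M X f x \<le> rev_hazard_rate M X f y"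
      unfolding ae_mono_on_def by blast
    have um0: "(\<lambda>x::real. - x) \<in> borel_measurable borel" by measurable
    have um[measurable]: "(uminus :: real \<Rightarrow> real) \<in> measurable \<mu> lborel"
      unfolding measurable_cong_sets[OF sm sets_lborel] using um0 by simp
    define \<nu> where "\<nu> = distr \<mu> lborel uminus"
    have dl: "distr lborel lborel uminus = (lborel :: real measure)"
    proof -
      have "distr lborel lborel uminus = distr lborel borel (uminus :: real \<Rightarrow> real)"
        by (rule distr_cong) auto
      also have "\<dots> = lborel" by (rule lborel_distr_uminus)
      finally show ?thesis .
    qed
    have D\<nu>: "\<nu> = density lborel (\<lambda>x. ennreal (f (- x)))"
    proof -
      have "density (distr lborel lborel uminus) (\<lambda>x. ennreal (f (- x)))
          = distr (density lborel (\<lambda>x. ennreal (f (- (- x))))) lborel uminus"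
        by (rule density_distr) auto
      then show ?thesis unfolding \<nu>_def D dl by simp
    qed
    have P\<nu>: "prob_space \<nu>" unfolding \<nu>_def by (rule mu.prob_space_distr) (rule um)
    interpret nu: prob_space \<nu> by (rule P\<nu>)
    have I2\<nu>: "integrable \<nu> (\<lambda>x. x\<^sup>2)" unfolding \<nu>_def using I2\<mu>
      by (subst integrable_distr_eq[OF um]) auto
    have mnu: "measure \<nu> A = measure \<mu> (uminus -` A)" if "A \<in> sets borel" for A
      unfolding \<nu>_def using that by (subst measure_distr[OF um]) (auto simp: spm)
    have nu1: "measure \<nu> {..z} = measure \<mu> {-z<..}" for z
    proof -
      have "uminus -` {..z} = {-z..}" by auto
      then show ?thesis using mnu[of "{..z}"] measure_open_closed[OF nsing, of "-z"] by (simp add: sm)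
    qed
    have nu2: "measure \<nu> {z<..} = measure \<mu> {..-z}" for z
    proof -
      have "uminus -` {z<..} = {..<-z}" by auto
      then show ?thesis using mnu[of "{z<..}"] measure_open_closed2[OF nsing, of "-z"] by (simp add: sm)
    qed
    define N' where "N' = uminus -` N"
    have N': "N' \<in> null_sets lborel"
    proof -
      have Ns: "N \<in> sets borel" using null_setsD2[OF N] by simp
      have "emeasure lborel N' = emeasure (distr lborel borel uminus) N"
        unfolding N'_def using Ns by (subst emeasure_distr) auto
      also have "\<dots> = 0" using N unfolding lborel_distr_uminus by auto
      finally have e0: "emeasure lborel N' = 0" .
      have "uminus -` N \<in> sets borel" using measurable_sets[OF um0 Ns] by simp
      then show ?thesis using e0 unfolding N'_def by (intro null_setsI) auto
    qed
    have key\<nu>: "(\<integral>x. (\<integral>t. \<bar>x - t\<bar> \<partial>\<nu>) \<partial>\<nu>)\<^sup>2 \<le> (\<integral>x. (x - (\<integral>t. t \<partial>\<nu>))\<^sup>2 \<partial>\<nu>)"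
    proof (rule core[OF P\<nu> D\<nu> _ _ I2\<nu>], measurable, simp add: assms(2), intro bexI[OF _ N'] allI impI)
      fix z v assume z: "z \<notin> N'" "v \<notin> N'" "z \<le> v" "0 < measure \<nu> {..z}" "0 < measure \<nu> {v<..}"
      define a where "a = - v"
      define b where "b = - z"
      have ab: "a \<le> b" "a \<notin> N" "b \<notin> N" using z unfolding a_def b_def N'_def by auto
      have Fa: "0 < measure \<mu> {..a}" using z(5) nu2[of v] unfolding a_def by simp
      have Sb: "0 < measure \<mu> {b<..}" using z(4) nu1[of z] unfolding b_def by simp
      have Fab: "measure \<mu> {..a} \<le> measure \<mu> {..b}"
        using ab by (intro mu.finite_measure_mono) (auto simp: sm)
      have aA: "a \<in> supp_region M X - N" using ab Fa Fab Sb scdf[of b] cdf[of a] cdf[of b]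
        unfolding supp_region_def by auto
      have bA: "b \<in> supp_region M X - N" using ab Fa Fab Sb scdf[of b] cdf[of b]
        unfolding supp_region_def by auto
      have "rev_hazard_rate M X f a \<le> rev_hazard_rate M X f b" using mono aA bA ab(1) by blast
      then have "f a / measure \<mu> {..a} \<le> f b / measure \<mu> {..b}"
        unfolding rev_hazard_rate_def cdf .
      moreover have "0 < measure \<mu> {..b}" using Fa Fab by linarith
      ultimately have "f a * measure \<mu> {..b} \<le> f b * measure \<mu> {..a}"
        using Fa by (simp add: field_simps)
      then show "f (- v) * measure \<nu> {z<..} \<le> f (- z) * measure \<nu> {v<..}"
        unfolding nu2 a_def b_def by simp
    qed
    note tr2 = transfer_gv[OF P\<mu> um, folded \<nu>_def]
    have e1: "\<bar>- x - - t\<bar> = \<bar>x - t\<bar>" for x t :: real by linarith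
    have e2: "(\<integral>x. (- x - (\<integral>t. - t \<partial>\<mu>))\<^sup>2 \<partial>\<mu>) = (\<integral>x. (x - (\<integral>t. t \<partial>\<mu>))\<^sup>2 \<partial>\<mu>)"
      by (simp add: power2_commute)
    show ?thesis using key\<nu> unfolding tr2(1)[symmetric] tr2(2)[symmetric] e1 e2 .
  qed
  have "(\<integral>\<omega>. (\<integral>\<omega>'. \<bar>X \<omega> - X \<omega>'\<bar> \<partial>M) \<partial>M)\<^sup>2 \<le> M.variance X"
    using key unfolding tr(1) tr(2) .
  then show ?thesis by (rule real_le_rsqrt)
qed

end
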